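(* Let $d,k\ge1$, let $g:\mathbb{R}^k\to\mathbb{R}$ be differentiable with $g(0)=0$ and $\nabla g(0)\neq \mathbf{0}$, and for $B\in\mathbb{R}^{k\times d}$ let $f(z)=g(Bz)$. Given $n$ training samples $\{(x_i,y_i)\}_{i=1}^n\subset\mathbb{R}^d\times\mathbb{R}$, suppose $f$ is trained to minimize $\frac12\sum_{i=1}^n(y_i-f(x_i))^2$ by gradient descent on $B$ with learning rate $\eta>0$, starting from $B^{(0)}=\mathbf{0}$. Let $B^{(1)}$ be the weight after one gradient descent step and $f_1(z):=g(B^{(1)}z)$. Then for every $z\in\mathbb{R}^d$, $$\nabla f_1(z)\,\nabla f_1(z)^T\propto {B^{(1)}}^TB^{(1)},$$ i.e. $\nabla f_1(z)\nabla f_1(z)^T$ is a scalar multiple of ${B^{(1)}}^TB^{(1)}$.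
   Context: $\nabla f_1(z)\in\mathbb{R}^d$ is the gradient of $f_1$ with respect to its input. "$P\propto Q$" for matrices means $P=cQ$ for some scalar $c$. *)

theory Defs
  imports "HOL-Analysis.Analysis"
begin

definition outer :: "real^'n \<Rightarrow> real^'m \<Rightarrow> real^'m^'n" where
  "outer u v = (\<chi> i j. u $ i * v $ j)"

definition sq_loss :: "(real^'k \<Rightarrow> real) \<Rightarrow> nat \<Rightarrow> (nat \<Rightarrow> real^'d) \<Rightarrow> (nat \<Rightarrow> real)
    \<Rightarrow> real^'d^'k \<Rightarrow> real" where
  "sq_loss g n x y B = (1/2) * (\<Sum>i=1..n. (y i - g (B *v x i))^2)"

end

theory Submission
  imports Defs
begin

lemma blin_mv: "bounded_linear (\<lambda>B::real^'d^'k. B *v v)"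
proof -
  have "linear (\<lambda>B::real^'d^'k. B *v v)"
    by (rule linearI) (simp_all add: matrix_vector_mult_add_rdistrib, simp add: vec_eq_iff matrix_vector_mult_def sum_distrib_left algebra_simps)
  then show ?thesis by (simp add: linear_conv_bounded_linear)
qed

lemma grad_rep: fixes f :: "real^'n \<Rightarrow> real" assumes "linear f"
  shows "f h = (\<chi> i. f (axis i 1)) \<bullet> h"
proof -
  have "f h = f (\<Sum>i\<in>UNIV. h$i *\<^sub>R axis i 1)" using basis_expansion[of h] by (simp add: scalar_mult_eq_scaleR)
  also have "\<dots> = (\<Sum>i\<in>UNIV. h$i * f(axis i 1))" using assms by (simp add: linear_sum linear_scale)
  also have "\<dots> = (\<chi> i. f (axis i 1)) \<bullet> h" by (simp add: inner_vec_def mult.commute)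
  finally show ?thesis .
qed

lemma has_grad: fixes g :: "real^'k \<Rightarrow> real" assumes "g differentiable (at w)"
  shows "\<exists>a. GDERIV g w :> a"
proof -
  obtain D where D: "(g has_derivative D) (at w)" using assms differentiable_def by blast
  then have lin: "linear D" using has_derivative_linear by blast
  have "D = (\<lambda>h. h \<bullet> (\<chi> i. D (axis i 1)))"
  proof (rule ext)
    fix h
    have "D h = (\<chi> i. D (axis i 1)) \<bullet> h" by (rule grad_rep[OF lin])
    also have "\<dots> = h \<bullet> (\<chi> i. D (axis i 1))" by (rule inner_commute)
    finally show "D h = h \<bullet> (\<chi> i. D (axis i 1))" .
  qed
  then have "GDERIV g w :> (\<chi> i. D (axis i 1))" using D unfolding gderiv_def by simp
  then show ?thesis by blast
qed
theorem proposition2: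
  fixes g :: "real^'k \<Rightarrow> real" and grad0 :: "real^'k"
    and n :: nat and x :: "nat \<Rightarrow> real^'d" and y :: "nat \<Rightarrow> real"
    and \<eta> :: real and G B1 :: "real^'d^'k"
  assumes diff: "\<forall>w. g differentiable (at w)"
    and g0: "g 0 = 0"
    and grad0: "GDERIV g 0 :> grad0" and grad0_nz: "grad0 \<noteq> 0"
    and eta: "\<eta> > 0"
    and lossgrad: "GDERIV (sq_loss g n x y) 0 :> G"
    and step: "B1 = 0 - \<eta> *\<^sub>R G"
  shows "\<forall>z :: real^'d. \<exists>D. GDERIV (\<lambda>w. g (B1 *v w)) z :> D \<and>
           (\<exists>c::real. outer D D = c *\<^sub>R (transpose B1 ** B1))"
proof -
  have hi: "((\<lambda>B::real^'d^'k. g (B *v x i)) has_derivative (\<lambda>H. grad0 \<bullet> (H *v x i))) (at 0)" for i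
  proof -
    have g': "(g has_derivative (\<lambda>h. grad0 \<bullet> h)) (at ((0::real^'d^'k) *v x i))"
      using grad0 unfolding gderiv_def by (simp add: inner_commute)
    show ?thesis
      by (rule has_derivative_compose[OF blin_mv[THEN bounded_linear.has_derivative, OF has_derivative_ident] g'])
  qed
  have "(sq_loss g n x y has_derivative
      (\<lambda>H. (1/2) * (\<Sum>i=1..n. 2 * (y i - g (0 *v x i)) * (- (grad0 \<bullet> (H *v x i)))))) (at 0)"
    unfolding sq_loss_def[abs_def]
    by (auto intro!: derivative_eq_intros hi simp: algebra_simps)
  then have L: "(sq_loss g n x y has_derivative
      (\<lambda>H. - (\<Sum>i=1..n. y i * (grad0 \<bullet> (H *v x i))))) (at 0)"
    by (simp add: g0 sum_negf sum_distrib_left[symmetric] mult.assoc)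
  have GL: "G \<bullet> H = - (\<Sum>i=1..n. y i * (grad0 \<bullet> (H *v x i)))" for H
    using has_derivative_unique[OF L lossgrad[unfolded gderiv_def]] by (metis inner_commute)
  define v where "v = (\<Sum>i=1..n. y i *\<^sub>R x i)"
  have Gab: "G $ a $ b = - (grad0 $ a * v $ b)" for a b
  proof -
    have "G \<bullet> axis a (axis b 1) = G $ a $ b" by (simp add: inner_axis)
    moreover have "axis a (axis b 1) *v x i = axis a (x i $ b)" for i
      by (simp add: vec_eq_iff matrix_vector_mult_def axis_def mult_delta_left)
    ultimately show ?thesis using GL[of "axis a (axis b 1)"]
      by (simp add: inner_axis v_def sum_component sum_distrib_left sum_negf algebra_simps)
  qed
  have B1ab: "B1 $ a $ b = \<eta> * grad0 $ a * v $ b" for a b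
    using Gab by (simp add: step)
  define q where "q = grad0 \<bullet> grad0"
  have q: "q > 0" using grad0_nz by (simp add: q_def)
  show ?thesis
  proof
    fix z :: "real^'d"
    obtain gw where gw: "GDERIV g (B1 *v z) :> gw" using has_grad diff by blast
    define s where "s = gw \<bullet> grad0"
    have gw': "(g has_derivative (\<lambda>h. gw \<bullet> h)) (at (B1 *v z))"
      using gw unfolding gderiv_def by (simp add: inner_commute)
    have "((\<lambda>w. g (B1 *v w)) has_derivative (\<lambda>h. gw \<bullet> (B1 *v h))) (at z)"
      by (rule has_derivative_compose[OF matrix_vector_mul_bounded_linear[THEN bounded_linear.has_derivative, OF has_derivative_ident] gw'])
    then have D: "GDERIV (\<lambda>w. g (B1 *v w)) z :> (gw v* B1)"
      unfolding gderiv_def by (simp add: dot_lmul_matrix inner_commute[of _ "gw v* B1"])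
    have Dj: "(gw v* B1) $ j = \<eta> * s * v $ j" for j
    proof -
      have "(gw v* B1) $ j = (\<Sum>i\<in>UNIV. (\<eta> * v $ j) * (gw $ i * grad0 $ i))"
        unfolding vector_matrix_mult_def by (simp add: B1ab mult_ac)
      also have "\<dots> = \<eta> * s * v $ j"
        by (simp add: sum_distrib_left[symmetric] s_def inner_vec_def mult_ac)
      finally show ?thesis .
    qed
    have M: "(transpose B1 ** B1) $ j $ l = \<eta>^2 * q * v$j * v$l" for j l
    proof -
      have "(transpose B1 ** B1) $ j $ l = (\<Sum>i\<in>UNIV. (\<eta>^2 * v$j * v$l) * (grad0 $ i * grad0 $ i))"
        unfolding matrix_matrix_mult_def transpose_def by (simp add: B1ab mult_ac power2_eq_square)
      also have "\<dots> = \<eta>^2 * q * v$j * v$l"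
        by (simp add: q_def inner_vec_def sum_distrib_left sum_distrib_right mult_ac)
      finally show ?thesis .
    qed
    have O: "outer (gw v* B1) (gw v* B1) = (s^2 / q) *\<^sub>R (transpose B1 ** B1)"
    proof -
      have "(\<eta> * s * v $ j) * (\<eta> * s * v $ l) = (s^2 / q) * (\<eta>^2 * q * v$j * v$l)" for j l
        using q by (simp add: power2_eq_square)
      then show ?thesis by (simp add: vec_eq_iff outer_def Dj M)
    qed
    show "\<exists>D. GDERIV (\<lambda>w. g (B1 *v w)) z :> D \<and>
           (\<exists>c::real. outer D D = c *\<^sub>R (transpose B1 ** B1))" by (rule exI[of _ "gw v* B1"], rule conjI[OF D], rule exI[of _ "s^2/q"], rule O)
  qed
qed
end
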